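(* Let $\mathcal A$ and $\mathcal B$ be Banach algebras and $\varphi:\mathcal A\to\mathcal B$ a continuous homomorphism with dense range. Let $I$ be a closed ideal of $\mathcal A$ and $J$ a closed ideal of $\mathcal B$ with $\varphi(I)\subseteq J$. If $\mathcal A$ has a bounded approximate identity modulo $I$, then $\mathcal B$ has a bounded approximate identity modulo $J$.
   Context: A Banach algebra $\mathcal A$ has a bounded approximate identity modulo a closed ideal $I$ if there is a bounded net $(u_\alpha)$ in $\mathcal A$ with $\lim_\alpha u_\alpha a=\lim_\alpha au_\alpha=a$ for all $a\in\mathcal A\setminus I$. *)

theory Defs
  imports "HOL-Analysis.Analysis"
begin

definition closed_ideal :: "'a::real_normed_algebra set \<Rightarrow> bool" where
  "closed_ideal I \<longleftrightarrow> closed I \<and> subspace I \<and>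
     (\<forall>a\<in>I. \<forall>x. x * a \<in> I \<and> a * x \<in> I)"

text \<open>Bounded approximate identity modulo I. A net in the algebra is represented,
  as usual in Isabelle/HOL, by a proper filter on the algebra (the image filter of the net).\<close>
definition bai_modulo :: "'a::real_normed_algebra set \<Rightarrow> bool" where
  "bai_modulo I \<longleftrightarrow> (\<exists>F :: 'a filter. F \<noteq> bot \<and>
     (\<exists>C. \<forall>\<^sub>F u in F. norm u \<le> C) \<and>
     (\<forall>a. a \<notin> I \<longrightarrow> ((\<lambda>u. u * a) \<longlongrightarrow> a) F \<and> ((\<lambda>u. a * u) \<longlongrightarrow> a) F))"

end

theory Submission
  imports Defs
begin

theorem corollary3p6:
  fixes \<phi> :: "'a::{real_normed_algebra,banach} \<Rightarrow> 'b::{real_normed_algebra,banach}"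
    and I :: "'a set" and J :: "'b set"
  assumes "bounded_linear \<phi>"
    and "\<And>x y. \<phi> (x * y) = \<phi> x * \<phi> y"
    and "closure (range \<phi>) = UNIV"
    and "closed_ideal I" and "closed_ideal J"
    and "\<phi> ` I \<subseteq> J"
    and "bai_modulo I"
  shows "bai_modulo J"
proof -
  interpret L: bounded_linear \<phi> by fact
  obtain F :: "'a filter" and C where F: "F \<noteq> bot" and FC: "\<forall>\<^sub>F u in F. norm u \<le> C"
    and Fl: "\<And>a. a \<notin> I \<Longrightarrow> ((\<lambda>u. u * a) \<longlongrightarrow> a) F \<and> ((\<lambda>u. a * u) \<longlongrightarrow> a) F"
    using assms(7) unfolding bai_modulo_def by blast
  obtain K where K: "K > 0" "\<And>x. norm (\<phi> x) \<le> norm x * K" using L.pos_bounded by blast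
  define B where "B = \<bar>C\<bar> * K + 1"
  have Bpos: "B > 0" using K unfolding B_def by (simp add: add_nonneg_pos)
  have FB: "\<forall>\<^sub>F u in F. norm (\<phi> (u::'a)) \<le> B"
    using FC
  proof (rule eventually_mono)
    fix u :: 'a assume "norm u \<le> C"
    have "norm (\<phi> u) \<le> norm u * K" by (rule K(2))
    also have "\<dots> \<le> \<bar>C\<bar> * K" using \<open>norm u \<le> C\<close> K(1)
      by (intro mult_right_mono) auto
    finally show "norm (\<phi> u) \<le> B" unfolding B_def by simp
  qed
  have cJ: "closed J" using assms(5) unfolding closed_ideal_def by blast
  have approx: "\<exists>a. a \<notin> I \<and> dist (\<phi> a) b < d" if bJ: "b \<notin> J" and dp: "d > 0" for b d
  proof -
    have "open (- J)" using cJ by auto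
    then obtain r where r: "r > 0" "ball b r \<subseteq> - J" using bJ
      by (meson ComplI open_contains_ball)
    have "b \<in> closure (range \<phi>)" using assms(3) by simp
    then obtain y where "y \<in> range \<phi>" "dist y b < min r d"
      using closure_approachable[of b "range \<phi>"] r(1) dp by (meson min_less_iff_conj)
    then obtain a where a: "dist (\<phi> a) b < min r d" by auto
    then have "\<phi> a \<in> ball b r" by (simp add: dist_commute)
    with r have "\<phi> a \<notin> J" by auto
    with assms(6) have "a \<notin> I" by auto
    with a show ?thesis by auto
  qed
  show ?thesis
    unfolding bai_modulo_def
  proof (intro exI[of _ "filtermap \<phi> F"] conjI allI impI)
    show "filtermap \<phi> F \<noteq> bot" using F by (simp add: filtermap_bot_iff)
    show "\<exists>C. \<forall>\<^sub>F u in filtermap \<phi> F. norm u \<le> C"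
      using FB by (auto simp: eventually_filtermap)
  next
    fix b assume b: "b \<notin> J"
    show "((\<lambda>u. u * b) \<longlongrightarrow> b) (filtermap \<phi> F)"
      unfolding filterlim_filtermap
    proof (rule tendstoI)
      fix e :: real assume e: "e > 0"
      define d where "d = e / (2 * (B + 1))"
      have d: "d > 0" using e Bpos by (simp add: d_def)
      have dB: "(B + 1) * d = e / 2" using Bpos by (simp add: d_def field_simps)
      obtain a where a: "a \<notin> I" "dist (\<phi> a) b < d" using approx[OF b d] by blast
      have "((\<lambda>u. \<phi> (u * a)) \<longlongrightarrow> \<phi> a) F" using Fl[OF a(1)] L.tendsto by blast
      hence "((\<lambda>u. \<phi> u * \<phi> a) \<longlongrightarrow> \<phi> a) F" by (simp add: assms(2))
      hence "\<forall>\<^sub>F u in F. dist (\<phi> u * \<phi> a) (\<phi> a) < e / 2"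
        using e by (intro tendstoD) auto
      with FB show "\<forall>\<^sub>F u in F. dist (\<phi> u * b) b < e"
      proof (eventually_elim)
        case (elim u)
        have "\<phi> u * b - b = \<phi> u * (b - \<phi> a) + (\<phi> u * \<phi> a - \<phi> a) + (\<phi> a - b)"
          by (simp add: algebra_simps)
        hence "norm (\<phi> u * b - b) \<le> norm (\<phi> u * (b - \<phi> a)) + norm (\<phi> u * \<phi> a - \<phi> a) + norm (\<phi> a - b)"
          using norm_triangle_ineq[of "_ + _" "\<phi> a - b"] norm_triangle_ineq[of _ "_ - \<phi> a"] by (smt (verit))
        also have "norm (\<phi> u * (b - \<phi> a)) \<le> B * d"
        proof -
          have "norm (\<phi> u * (b - \<phi> a)) \<le> norm (\<phi> u) * norm (b - \<phi> a)" by (rule norm_mult_ineq)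
          also have "\<dots> \<le> B * d" using elim(1) a(2) Bpos d
            by (intro mult_mono) (auto simp: dist_norm norm_minus_commute less_imp_le)
          finally show ?thesis .
        qed
        finally have "norm (\<phi> u * b - b) \<le> B * d + norm (\<phi> u * \<phi> a - \<phi> a) + norm (\<phi> a - b)" by simp
        moreover have "norm (\<phi> u * \<phi> a - \<phi> a) < e/2" using elim(2) by (simp add: dist_norm)
        moreover have "norm (\<phi> a - b) < d" using a(2) by (simp add: dist_norm)
        ultimately show ?case using dB unfolding dist_norm by (simp add: algebra_simps)
      qed
    qed
    show "((\<lambda>u. b * u) \<longlongrightarrow> b) (filtermap \<phi> F)"
      unfolding filterlim_filtermap
    proof (rule tendstoI)
      fix e :: real assume e: "e > 0"
      define d where "d = e / (2 * (B + 1))"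
      have d: "d > 0" using e Bpos by (simp add: d_def)
      have dB: "(B + 1) * d = e / 2" using Bpos by (simp add: d_def field_simps)
      obtain a where a: "a \<notin> I" "dist (\<phi> a) b < d" using approx[OF b d] by blast
      have "((\<lambda>u. \<phi> (a * u)) \<longlongrightarrow> \<phi> a) F" using Fl[OF a(1)] L.tendsto by blast
      hence "((\<lambda>u. \<phi> a * \<phi> u) \<longlongrightarrow> \<phi> a) F" by (simp add: assms(2))
      hence "\<forall>\<^sub>F u in F. dist (\<phi> a * \<phi> u) (\<phi> a) < e / 2"
        using e by (intro tendstoD) auto
      with FB show "\<forall>\<^sub>F u in F. dist (b * \<phi> u) b < e"
      proof (eventually_elim)
        case (elim u)
        have "b * \<phi> u - b = (b - \<phi> a) * \<phi> u + (\<phi> a * \<phi> u - \<phi> a) + (\<phi> a - b)"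
          by (simp add: algebra_simps)
        hence "norm (b * \<phi> u - b) \<le> norm ((b - \<phi> a) * \<phi> u) + norm (\<phi> a * \<phi> u - \<phi> a) + norm (\<phi> a - b)"
          using norm_triangle_ineq[of "_ + _" "\<phi> a - b"] norm_triangle_ineq[of _ "_ - \<phi> a"] by (smt (verit))
        also have "norm ((b - \<phi> a) * \<phi> u) \<le> B * d"
        proof -
          have "norm ((b - \<phi> a) * \<phi> u) \<le> norm (b - \<phi> a) * norm (\<phi> u)" by (rule norm_mult_ineq)
          also have "\<dots> \<le> d * B" using elim(1) a(2) Bpos d
            by (intro mult_mono) (auto simp: dist_norm norm_minus_commute less_imp_le)
          finally show ?thesis by (simp add: mult.commute)
        qed
        finally have "norm (b * \<phi> u - b) \<le> B * d + norm (\<phi> a * \<phi> u - \<phi> a) + norm (\<phi> a - b)" by simp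
        moreover have "norm (\<phi> a * \<phi> u - \<phi> a) < e/2" using elim(2) by (simp add: dist_norm)
        moreover have "norm (\<phi> a - b) < d" using a(2) by (simp add: dist_norm)
        ultimately show ?case using dB unfolding dist_norm by (simp add: algebra_simps)
      qed
    qed
  qed
qed

end
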